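(* Let $\mathcal L$ be an expansion of the language of ordered groups and let $G$ be an $\mathcal L$-structure whose reduct is a densely ordered abelian group. If $G$ satisfies the scheme DCI, then the group $G$ is divisible.
   Context: For an $\mathcal L$-formula $\varphi(v,\bar w)$, $\mathrm{DCI}_\varphi$ is the sentence $\forall\bar w\Big(\big(\exists s\,\forall v<s\,\varphi(v,\bar w)\ \wedge\ \forall v\big(\forall s<v\,\varphi(s,\bar w)\to\exists u>v\,\forall s<u\,\varphi(s,\bar w)\big)\big)\to\forall v\,\varphi(v,\bar w)\Big)$, and DCI is the scheme $\{\mathrm{DCI}_\varphi:\varphi(v,\bar w)\text{ an }\mathcal L\text{-formula}\}$. Divisible means: for every $g\in G$ and integer $n\ge1$ there is $h\in G$ with $nh=g$. *)

theory Defs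
  imports Main
begin

datatype 'f trm = Var nat | Zero | Plus "'f trm" "'f trm" | Neg "'f trm" | Fn 'f "'f trm list"

datatype ('f, 'r) fm =
    Eq "'f trm" "'f trm"
  | Less "'f trm" "'f trm"
  | Rel 'r "'f trm list"
  | FFalse
  | Not "('f, 'r) fm"
  | And "('f, 'r) fm" "('f, 'r) fm"
  | Ex nat "('f, 'r) fm"

primrec eval :: "('f \<Rightarrow> 'a list \<Rightarrow> 'a) \<Rightarrow> (nat \<Rightarrow> 'a) \<Rightarrow> 'f trm \<Rightarrow> 'a::ab_group_add" where
  "eval F e (Var i) = e i"
| "eval F e Zero = 0"
| "eval F e (Plus s t) = eval F e s + eval F e t"
| "eval F e (Neg t) = - eval F e t"
| "eval F e (Fn f ts) = F f (map (eval F e) ts)"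

primrec sat :: "('f \<Rightarrow> 'a::linordered_ab_group_add list \<Rightarrow> 'a) \<Rightarrow> ('r \<Rightarrow> 'a list \<Rightarrow> bool) \<Rightarrow> (nat \<Rightarrow> 'a)
    \<Rightarrow> ('f, 'r) fm \<Rightarrow> bool" where
  "sat F R e (Eq s t) = (eval F e s = eval F e t)"
| "sat F R e (Less s t) = (eval F e s < eval F e t)"
| "sat F R e (Rel r ts) = R r (map (eval F e) ts)"
| "sat F R e FFalse = False"
| "sat F R e (Not \<phi>) = (\<not> sat F R e \<phi>)"
| "sat F R e (And \<phi> \<psi>) = (sat F R e \<phi> \<and> sat F R e \<psi>)"
| "sat F R e (Ex i \<phi>) = (\<exists>x. sat F R (e(i := x)) \<phi>)"

text \<open>The structure (universe = the type 'a, interpretations F, R) satisfies DCI for the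
  formula \<phi> with distinguished variable v; all other variables are the parameters w.\<close>
definition DCI :: "('f \<Rightarrow> 'a::linordered_ab_group_add list \<Rightarrow> 'a) \<Rightarrow> ('r \<Rightarrow> 'a list \<Rightarrow> bool) \<Rightarrow> ('f, 'r) fm \<Rightarrow> nat
    \<Rightarrow> bool" where
  "DCI F R \<phi> v \<longleftrightarrow> (\<forall>e :: nat \<Rightarrow> 'a.
     ((\<exists>s. \<forall>x<s. sat F R (e(v := x)) \<phi>) \<and>
      (\<forall>x. (\<forall>s<x. sat F R (e(v := s)) \<phi>) \<longrightarrow> (\<exists>u>x. \<forall>s<u. sat F R (e(v := s)) \<phi>)))
     \<longrightarrow> (\<forall>x. sat F R (e(v := x)) \<phi>))"

primrec nmul :: "nat \<Rightarrow> 'a::monoid_add \<Rightarrow> 'a" where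
  "nmul 0 h = 0"
| "nmul (Suc n) h = h + nmul n h"

end

theory Submission
  imports Defs
begin

primrec mt :: "nat \<Rightarrow> 'f trm" where
  "mt 0 = Zero"
| "mt (Suc n) = Plus (Var 0) (mt n)"

lemma eval_mt: "eval F e (mt n) = nmul n (e 0)"
  by (induct n) auto

lemma nmul_zero[simp]: "nmul n (0::'a::monoid_add) = 0"
  by (induct n) auto

lemma nmul_add: "nmul n (a + b) = nmul n a + nmul n (b::'a::ab_group_add)"
  by (induct n) (auto simp: algebra_simps)

lemma nmul_diff: "nmul n (a - b) = nmul n a - nmul n (b::'a::ab_group_add)"
  using nmul_add[of n "a - b" b] by (simp add: algebra_simps)

lemma nmul_mono: "a \<le> b \<Longrightarrow> nmul n a \<le> nmul n (b::'a::linordered_ab_group_add)"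
  by (induct n) (auto intro: add_mono)

lemma nmul_strict: "n \<ge> 1 \<Longrightarrow> a < b \<Longrightarrow> nmul n a < nmul n (b::'a::linordered_ab_group_add)"
proof (induct n)
  case (Suc n) then show ?case using nmul_mono[of a b n] by (auto intro: add_less_le_mono)
qed simp

lemma nmul_ge: "n \<ge> 1 \<Longrightarrow> 0 \<le> a \<Longrightarrow> a \<le> nmul n (a::'a::linordered_ab_group_add)"
proof (induct n)
  case (Suc n)
  have "0 \<le> nmul n a" using nmul_mono[of 0 a n] Suc by (induct n) auto
  then show ?case by simp
qed simp

lemma nmul_le: "n \<ge> 1 \<Longrightarrow> a \<le> 0 \<Longrightarrow> nmul n a \<le> (a::'a::linordered_ab_group_add)"
proof (induct n)
  case (Suc n)
  have "nmul n a \<le> 0" using nmul_mono[of a 0 n] Suc by (induct n) auto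
  then show ?case by simp
qed simp

lemma small:
  fixes \<epsilon> :: "'a::linordered_ab_group_add"
  assumes dense: "\<forall>x y :: 'a. x < y \<longrightarrow> (\<exists>z. x < z \<and> z < y)"
  shows "0 < \<epsilon> \<Longrightarrow> \<exists>\<delta>>0. nmul n \<delta> < \<epsilon>"
proof (induct n arbitrary: \<epsilon>)
  case 0 then show ?case using dense by auto
next
  case (Suc n)
  obtain d where d: "0 < d" "d < \<epsilon>" using dense Suc.prems by blast
  define \<eta> where "\<eta> = min d (\<epsilon> - d)"
  have eta: "0 < \<eta>" "\<eta> + \<eta> \<le> \<epsilon>" using d unfolding \<eta>_def min_def by (auto simp: algebra_simps)
  obtain \<delta> where del: "0 < \<delta>" "nmul n \<delta> < \<eta>" using Suc.hyps eta by blast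
  obtain \<eta>' where e': "0 < \<eta>'" "\<eta>' < \<eta>" using dense eta by blast
  define \<delta>' where "\<delta>' = min \<delta> \<eta>'"
  have "0 < \<delta>'" "\<delta>' < \<eta>" "\<delta>' \<le> \<delta>" using del e' unfolding \<delta>'_def by (auto simp: min_less_iff_disj)
  moreover have "nmul n \<delta>' < \<eta>" using nmul_mono[OF \<open>\<delta>' \<le> \<delta>\<close>, of n] del by simp
  ultimately show ?case using eta by (intro exI[of _ \<delta>']) (auto intro: add_strict_mono less_le_trans)
qed

theorem corollary3p3:
  fixes F :: "'f \<Rightarrow> 'a list \<Rightarrow> 'a::linordered_ab_group_add"
    and R :: "'r \<Rightarrow> 'a list \<Rightarrow> bool"
  assumes dense: "\<forall>x y :: 'a. x < y \<longrightarrow> (\<exists>z. x < z \<and> z < y)"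
    and dci: "\<forall>(\<phi> :: ('f, 'r) fm) v. DCI F R \<phi> v"
  shows "\<forall>(g :: 'a) (n :: nat). n \<ge> 1 \<longrightarrow> (\<exists>h. nmul n h = g)"
proof (intro allI impI)
  fix g :: 'a and n :: nat
  assume n: "n \<ge> 1"
  show "\<exists>h. nmul n h = g"
  proof (rule ccontr)
    assume nd: "\<not> (\<exists>h. nmul n h = g)"
    define \<phi> :: "('f, 'r) fm" where "\<phi> = Less (mt n) (Var 1)"
    define e :: "nat \<Rightarrow> 'a" where "e = (\<lambda>_. g)"
    have S: "sat F R (e(0 := x)) \<phi> \<longleftrightarrow> nmul n x < g" for x
      unfolding \<phi>_def e_def by (simp add: eval_mt)
    have D: "DCI F R \<phi> 0" using dci by blast
    have base: "\<exists>s. \<forall>x<s. sat F R (e(0 := x)) \<phi>"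
    proof (intro exI[of _ "min 0 g"] allI impI)
      fix x assume "x < min 0 g"
      then have "nmul n x \<le> x" "x < g" using nmul_le[OF n, of x] by auto
      then show "sat F R (e(0 := x)) \<phi>" using S by simp
    qed
    have step: "\<forall>x. (\<forall>s<x. sat F R (e(0 := s)) \<phi>) \<longrightarrow> (\<exists>u>x. \<forall>s<u. sat F R (e(0 := s)) \<phi>)"
    proof (intro allI impI)
      fix x assume H: "\<forall>s<x. sat F R (e(0 := s)) \<phi>"
      show "\<exists>u>x. \<forall>s<u. sat F R (e(0 := s)) \<phi>"
      proof (cases "nmul n x < g")
        case True
        then obtain \<delta> where dl: "0 < \<delta>" "nmul n \<delta> < g - nmul n x"
          using small[OF dense, of "g - nmul n x" n] by auto
        show ?thesis
        proof (intro exI[of _ "x + \<delta>"] conjI allI impI)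
          show "x < x + \<delta>" using dl by simp
          fix s assume "s < x + \<delta>"
          then have "nmul n s < nmul n x + nmul n \<delta>" using nmul_strict[OF n] nmul_add by metis
          then show "sat F R (e(0 := s)) \<phi>" using S dl by (simp add: algebra_simps)
        qed
      next
        case False
        then have gt: "g < nmul n x" using nd by (metis less_linear)
        then obtain \<delta> where dl: "0 < \<delta>" "nmul n \<delta> < nmul n x - g"
          using small[OF dense, of "nmul n x - g" n] by auto
        have "x - \<delta> < x" using dl by simp
        then have "nmul n (x - \<delta>) < g" using H S by blast
        then show ?thesis using dl by (simp add: nmul_diff algebra_simps)
      qed
    qed
    have "\<forall>x. sat F R (e(0 := x)) \<phi>" using D base step unfolding DCI_def by blast
    then have "nmul n (max 0 g) < g" using S by blast
    moreover have "max 0 g \<le> nmul n (max 0 g)" using nmul_ge[OF n, of "max 0 g"] by simp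
    ultimately show False by (meson max.cobounded2 order.trans not_less)
  qed
qed

end
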